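(* Let $G$ be a tree on $k\ge 2$ vertices, $n\ge 1$, and let $e$ be an edge of $G$. Then $\Gamma^G_n$ has exactly one $e$-cycle of length $2^n$, and for each $0\le i<n$ the number of $e$-cycles of length $2^i$ in $\Gamma^G_n$ is $(k-2)k^{n-i-1}$. (Every $e$-cycle has length $2^i$ for some $0\le i\le n$.)
   Context: Let $G=(V,E)$ be a finite tree with vertex set $V$ of size $k$, and fix an orientation of each edge, so that each edge becomes an ordered pair $e=(s,t)$. Each oriented edge $e=(s,t)$ acts on the set $V^*$ of finite words over the alphabet $V$ by the recursive rule: $e(\emptyset)=\emptyset$, $e(sw)=t\,e(w)$, $e(tw)=sw$, and $e(xw)=xw$ for $x\in V\setminus\{s,t\}$ (words are read left to right, $w\in V^*$). This action preserves word length. For $n\ge 1$, the Schreier graph $\Gamma_n^G$ is the multigraph with vertex set $V^n$ having, for each $u\in V^n$ and each oriented edge $e$ of $G$, one edge joining $u$ and $e(u)$, labelled $e$ (a loop if $e(u)=u$). For an edge $e$ of $G$, the $e$-cycles of $\Gamma_n^G$ are the subgraphs formed by an orbit of $e$ on $V^n$ together with the edges labelled $e$ between its vertices; an orbit of size $m$ gives an $e$-cycle of length $m$ (a loop if $m=1$, a pair of parallel edges if $m=2$). *)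

theory Defs
  imports Main
begin

fun edge_act :: "'a \<times> 'a \<Rightarrow> 'a list \<Rightarrow> 'a list" where
  "edge_act e [] = []"
| "edge_act (s, t) (x # w) =
     (if x = s then t # edge_act (s, t) w
      else if x = t then s # w
      else x # w)"

definition adj :: "('a \<times> 'a) set \<Rightarrow> 'a \<Rightarrow> 'a \<Rightarrow> bool" where
  "adj E x y \<longleftrightarrow> (x, y) \<in> E \<or> (y, x) \<in> E"

definition oriented_tree :: "'a set \<Rightarrow> ('a \<times> 'a) set \<Rightarrow> bool" where
  "oriented_tree V E \<longleftrightarrow>
     finite V \<and> V \<noteq> {} \<and> E \<subseteq> V \<times> V \<and>
     (\<forall>(a, b) \<in> E. a \<noteq> b \<and> (b, a) \<notin> E) \<and>
     (\<forall>x\<in>V. \<forall>y\<in>V. (x, y) \<in> (E \<union> E\<inverse>)\<^sup>*) \<and>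
     \<not> (\<exists>cs. length cs \<ge> 3 \<and> distinct cs \<and> set cs \<subseteq> V \<and>
            (\<forall>i < length cs. adj E (cs ! i) (cs ! ((i + 1) mod length cs))))"

definition words :: "'a set \<Rightarrow> nat \<Rightarrow> 'a list set" where
  "words V n = {w. length w = n \<and> set w \<subseteq> V}"

definition edge_orbit :: "'a \<times> 'a \<Rightarrow> 'a list \<Rightarrow> 'a list set" where
  "edge_orbit e u = {(edge_act e ^^ m) u | m. True}"

(* the e-cycles of Gamma_n, represented by their vertex sets (orbits of e on V^n);
   an e-cycle has length m iff its orbit has m elements *)
definition e_cycles :: "'a set \<Rightarrow> nat \<Rightarrow> 'a \<times> 'a \<Rightarrow> 'a list set set" where
  "e_cycles V n e = edge_orbit e ` words V n"

definition num_e_cycles :: "'a set \<Rightarrow> nat \<Rightarrow> 'a \<times> 'a \<Rightarrow> nat \<Rightarrow> nat" where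
  "num_e_cycles V n e m = card {C \<in> e_cycles V n e. card C = m}"

end

theory Submission imports Defs begin
fun dec :: "'a \<Rightarrow> 'a \<Rightarrow> nat \<Rightarrow> nat \<Rightarrow> 'a list" where
  "dec s t 0 m = []"
| "dec s t (Suc j) m = (if m mod 2 = 1 then s else t) # dec s t j (m div 2)"
fun val :: "'a \<Rightarrow> 'a list \<Rightarrow> nat" where
  "val s [] = 0"
| "val s (x # p) = (if x = s then 1 else 0) + 2 * val s p"
lemma mod2e: "(m::nat) mod (2 * 2 ^ j) = 2 * (m div 2 mod 2 ^ j) + m mod 2"
  by (simp add: mod_mult2_eq)
lemma dec_length [simp]: "length (dec s t j m) = j"
  by (induction j arbitrary: m) auto
lemma dec_set: "set (dec s t j m) \<subseteq> {s, t}"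
  by (induction j arbitrary: m) auto
lemma dec_mod: "dec s t j (m mod 2 ^ j) = dec s t j m"
proof (induction j arbitrary: m)
  case 0
  then show ?case by simp
next
  case (Suc j)
  have a: "m mod (2 * 2 ^ j) mod 2 = m mod 2"
    unfolding mod2e by simp
  have b: "m mod (2 * 2 ^ j) div 2 = m div 2 mod 2 ^ j"
    unfolding mod2e by simp
  show ?case using Suc a b by (simp only: dec.simps power_Suc)
qed
lemma val_dec:
  assumes "s \<noteq> t"
  shows "val s (dec s t j m) = m mod 2 ^ j"
proof (induction j arbitrary: m)
  case 0
  then show ?case by simp
next
  case (Suc j)
  have "val s (dec s t (Suc j) m) = m mod 2 + 2 * val s (dec s t j (m div 2))"
  proof (cases "m mod 2 = 1")
    case True then show ?thesis by simp
  next
    case False then have "m mod 2 = 0" by presburger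
    then show ?thesis using assms False by simp
  qed
  also have "\<dots> = m mod 2 + 2 * (m div 2 mod 2 ^ j)" using Suc by simp
  also have "\<dots> = m mod 2 ^ Suc j" using mod2e[of m j] by simp
  finally show ?case .
qed

lemma dec_val: "set p \<subseteq> {s, t} \<Longrightarrow> dec s t (length p) (val s p) = p"
proof (induction p)
  case Nil
  then show ?case by simp
next
  case (Cons x p)
  let ?b = "(if x = s then 1 else 0) :: nat"
  have a: "(?b + 2 * val s p) mod 2 = ?b" "(?b + 2 * val s p) div 2 = val s p" by auto
  have "x = s \<or> x = t" using Cons by auto
  then show ?case using Cons a by (auto simp del: mod_mult2_eq)
qed
definition good :: "'a \<Rightarrow> 'a \<Rightarrow> 'a list \<Rightarrow> bool" where
  "good s t r \<longleftrightarrow> r = [] \<or> hd r \<notin> {s, t}"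
lemma act_dec:
  assumes "s \<noteq> t" "good s t r"
  shows "edge_act (s, t) (dec s t j m @ r) = dec s t j (Suc m) @ r"
proof (induction j arbitrary: m)
  case 0
  show ?case
  proof (cases r)
    case Nil then show ?thesis by simp
  next
    case (Cons x w)
    then have "x \<noteq> s" "x \<noteq> t" using assms(2) by (auto simp: good_def)
    then show ?thesis using Cons by simp
  qed
next
  case (Suc j)
  show ?case
  proof (cases "m mod 2 = 1")
    case True
    then have a: "Suc m mod 2 \<noteq> 1" "Suc m div 2 = Suc (m div 2)" by presburger+
    have "edge_act (s, t) (dec s t (Suc j) m @ r) = t # edge_act (s, t) (dec s t j (m div 2) @ r)"
      using True by simp
    also have "\<dots> = t # (dec s t j (Suc (m div 2)) @ r)" using Suc by simp
    also have "\<dots> = dec s t (Suc j) (Suc m) @ r" using a by (simp only: dec.simps if_False append_Cons)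
    finally show ?thesis .
  next
    case False
    then have a: "Suc m mod 2 = 1" "Suc m div 2 = m div 2" by presburger+
    have "edge_act (s, t) (dec s t (Suc j) m @ r) = s # (dec s t j (m div 2) @ r)"
      using False assms(1) by simp
    also have "\<dots> = dec s t (Suc j) (Suc m) @ r" using a by (simp only: dec.simps if_True append_Cons simp_thms)
    finally show ?thesis .
  qed
qed

lemma act_pow:
  assumes "s \<noteq> t" "good s t r"
  shows "(edge_act (s, t) ^^ a) (dec s t j m @ r) = dec s t j (m + a) @ r"
proof (induction a)
  case 0 then show ?case by simp
next
  case (Suc a)
  have "(edge_act (s, t) ^^ Suc a) (dec s t j m @ r) = edge_act (s, t) (dec s t j (m + a) @ r)"
    using Suc by simp
  also have "\<dots> = dec s t j (m + Suc a) @ r" using act_dec[OF assms] by simp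
  finally show ?case .
qed

definition orb :: "'a \<Rightarrow> 'a \<Rightarrow> nat \<Rightarrow> 'a list \<Rightarrow> 'a list set" where
  "orb s t j r = (\<lambda>m. dec s t j m @ r) ` {..<2 ^ j}"

lemma orbit_dec:
  assumes "s \<noteq> t" "good s t r"
  shows "edge_orbit (s, t) (dec s t j m @ r) = orb s t j r"
proof
  show "edge_orbit (s, t) (dec s t j m @ r) \<subseteq> orb s t j r"
  proof
    fix x assume "x \<in> edge_orbit (s, t) (dec s t j m @ r)"
    then obtain a where "x = dec s t j (m + a) @ r"
      unfolding edge_orbit_def using act_pow[OF assms] by auto
    then have "x = dec s t j ((m + a) mod 2 ^ j) @ r" by (simp add: dec_mod)
    then show "x \<in> orb s t j r" unfolding orb_def by auto
  qed
next
  show "orb s t j r \<subseteq> edge_orbit (s, t) (dec s t j m @ r)"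
  proof
    fix x assume "x \<in> orb s t j r"
    then obtain c where c: "c < 2 ^ j" "x = dec s t j c @ r" unfolding orb_def by auto
    define a where "a = c + 2 ^ j * (m + 1) - m"
    have "(1::nat) \<le> 2 ^ j" by simp
    then have "1 * (m + 1) \<le> 2 ^ j * (m + 1)" by (rule mult_le_mono1)
    then have eq: "m + a = c + 2 ^ j * (m + 1)" unfolding a_def by simp
    have "(m + a) mod 2 ^ j = (c + 2 ^ j * (m + 1)) mod 2 ^ j" by (simp only: eq)
    also have "\<dots> = c mod 2 ^ j" by (rule mod_mult_self2)
    also have "\<dots> = c" using c by simp
    finally have "(m + a) mod 2 ^ j = c" .
    then have "dec s t j (m + a) = dec s t j c" by (metis dec_mod)
    then have "x = (edge_act (s, t) ^^ a) (dec s t j m @ r)"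
      using c act_pow[OF assms] by simp
    then show "x \<in> edge_orbit (s, t) (dec s t j m @ r)" unfolding edge_orbit_def by auto
  qed
qed

lemma card_orb:
  assumes "s \<noteq> t"
  shows "card (orb s t j r) = 2 ^ j"
proof -
  have "inj_on (\<lambda>m. dec s t j m @ r) {..<2 ^ j}"
  proof
    fix x y assume xy: "x \<in> {..<2 ^ j}" "y \<in> {..<2 ^ j}" "dec s t j x @ r = dec s t j y @ r"
    then have "val s (dec s t j x) = val s (dec s t j y)" by simp
    then show "x = y" using val_dec[OF assms] xy by simp
  qed
  then show ?thesis unfolding orb_def by (simp add: card_image)
qed

lemma orb_inj: "orb s t j r = orb s t j r' \<Longrightarrow> r = r'"
proof -
  assume "orb s t j r = orb s t j r'"
  then have "dec s t j 0 @ r \<in> orb s t j r'" unfolding orb_def by auto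
  then obtain m where "dec s t j 0 @ r = dec s t j m @ r'" unfolding orb_def by auto
  then show "r = r'" by (simp add: append_eq_append_conv)
qed

theorem proposition3p3:
  fixes V :: "'a set" and E :: "('a \<times> 'a) set" and k n :: nat and e :: "'a \<times> 'a"
  assumes "oriented_tree V E" and "card V = k" and "k \<ge> 2" and "n \<ge> 1" and "e \<in> E"
  shows "num_e_cycles V n e (2 ^ n) = 1 \<and>
         (\<forall>i < n. num_e_cycles V n e (2 ^ i) = (k - 2) * k ^ (n - i - 1)) \<and>
         (\<forall>C \<in> e_cycles V n e. \<exists>i \<le> n. card C = 2 ^ i)"
proof -
  obtain s t where e: "e = (s, t)" by (cases e)
  note ot0 = assms(1)[unfolded oriented_tree_def]
  have fin: "finite V" using conjunct1[OF ot0] .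
  have sub: "E \<subseteq> V \<times> V" using conjunct1[OF conjunct2[OF conjunct2[OF ot0]]] .
  have irr: "\<forall>(a, b) \<in> E. a \<noteq> b \<and> (b, a) \<notin> E"
    using conjunct1[OF conjunct2[OF conjunct2[OF conjunct2[OF ot0]]]] .
  have se: "(s, t) \<in> E" using assms(5) e by simp
  have st1: "s \<noteq> t" using bspec[OF irr se] by simp
  have st2: "s \<in> V" "t \<in> V" using sub se by blast+
  note st = st1 st2
  define R where "R j = {r. length r = n - j \<and> set r \<subseteq> V \<and> good s t r}" for j
  have char: "e_cycles V n e = (\<lambda>(j, r). orb s t j r) ` (SIGMA j:{..n}. R j)"
  proof
    show "e_cycles V n e \<subseteq> (\<lambda>(j, r). orb s t j r) ` (SIGMA j:{..n}. R j)"
    proof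
      fix C assume "C \<in> e_cycles V n e"
      then obtain w where w: "w \<in> words V n" "C = edge_orbit (s, t) w"
        unfolding e_cycles_def e by auto
      define P where "P = (\<lambda>x. x \<in> {s, t})"
      define p where "p = takeWhile P w"
      define r where "r = dropWhile P w"
      have wpr: "w = p @ r" unfolding p_def r_def by simp
      have ps: "set p \<subseteq> {s, t}"
      proof
        fix x assume "x \<in> set p"
        then have "P x" unfolding p_def using set_takeWhileD by metis
        then show "x \<in> {s, t}" unfolding P_def .
      qed
      have g: "good s t r"
      proof (cases "r = []")
        case True then show ?thesis by (simp add: good_def)
      next
        case False
        then have "\<not> P (hd r)" using hd_dropWhile r_def by metis
        then show ?thesis by (simp add: good_def P_def)
      qed
      have "w = dec s t (length p) (val s p) @ r" using wpr dec_val[OF ps] by simp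
      then have "C = orb s t (length p) r" using w orbit_dec[OF st(1) g] by simp
      moreover have "length p \<le> n" "r \<in> R (length p)"
        using w(1) wpr g unfolding words_def R_def by auto
      ultimately show "C \<in> (\<lambda>(j, r). orb s t j r) ` (SIGMA j:{..n}. R j)" by force
    qed
  next
    show "(\<lambda>(j, r). orb s t j r) ` (SIGMA j:{..n}. R j) \<subseteq> e_cycles V n e"
    proof
      fix C assume "C \<in> (\<lambda>(j, r). orb s t j r) ` (SIGMA j:{..n}. R j)"
      then obtain j r where jr: "j \<le> n" "r \<in> R j" "C = orb s t j r" by auto
      have g: "good s t r" using jr unfolding R_def by auto
      have "dec s t j 0 @ r \<in> words V n"
        using jr dec_set[of s t j 0] st unfolding words_def R_def by auto
      moreover have "C = edge_orbit (s, t) (dec s t j 0 @ r)" using orbit_dec[OF st(1) g] jr by simp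
      ultimately show "C \<in> e_cycles V n e" unfolding e_cycles_def e by auto
    qed
  qed
  have cnt: "num_e_cycles V n e (2 ^ i) = card (R i)" if "i \<le> n" for i
  proof -
    have "{C \<in> e_cycles V n e. card C = 2 ^ i} = orb s t i ` R i"
    proof
      show "{C \<in> e_cycles V n e. card C = 2 ^ i} \<subseteq> orb s t i ` R i"
      proof
        fix C assume "C \<in> {C \<in> e_cycles V n e. card C = 2 ^ i}"
        then obtain j r where jr: "j \<le> n" "r \<in> R j" "C = orb s t j r" "card C = 2 ^ i"
          unfolding char by auto
        then have "(2::nat) ^ j = 2 ^ i" using card_orb[OF st(1)] by simp
        then have "j = i" by simp
        then show "C \<in> orb s t i ` R i" using jr by auto
      qed
    next
      show "orb s t i ` R i \<subseteq> {C \<in> e_cycles V n e. card C = 2 ^ i}"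
        using that card_orb[OF st(1)] unfolding char by auto
    qed
    moreover have "inj_on (orb s t i) (R i)" by (meson inj_onI orb_inj)
    ultimately show ?thesis unfolding num_e_cycles_def by (simp add: card_image)
  qed
  have "R n = {[]}" unfolding R_def good_def by auto
  then have A: "num_e_cycles V n e (2 ^ n) = 1" using cnt[of n] by simp
  have B: "num_e_cycles V n e (2 ^ i) = (k - 2) * k ^ (n - i - 1)" if i_lt: "i < n" for i
  proof -
    define W where "W = {xs. set xs \<subseteq> V \<and> length xs = n - i - 1}"
    have "R i = (\<lambda>(x, r). x # r) ` ((V - {s, t}) \<times> W)"
    proof
      show "R i \<subseteq> (\<lambda>(x, r). x # r) ` ((V - {s, t}) \<times> W)"
      proof
        fix r assume r: "r \<in> R i"
        then obtain x r' where "r = x # r'" using r i_lt unfolding R_def by (cases r) auto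
        moreover have "x \<in> V - {s, t}" "r' \<in> W"
          using r calculation unfolding R_def W_def good_def by auto
        ultimately show "r \<in> (\<lambda>(x, r). x # r) ` ((V - {s, t}) \<times> W)"
          by (auto intro: rev_image_eqI)
      qed
    next
      show "(\<lambda>(x, r). x # r) ` ((V - {s, t}) \<times> W) \<subseteq> R i"
        using i_lt unfolding R_def W_def good_def by auto
    qed
    moreover have "inj_on (\<lambda>(x, r). x # r) ((V - {s, t}) \<times> W)" by (auto simp: inj_on_def)
    ultimately have "card (R i) = card ((V - {s, t}) \<times> W)"
      using card_image by metis
    then have "card (R i) = card (V - {s, t}) * card W"
      by (simp only: card_cartesian_product)
    moreover have "card (V - {s, t}) = k - 2" using st fin assms(2) by (simp add: card_Diff_subset)
    moreover have "card W = k ^ (n - i - 1)" unfolding W_def using fin assms(2) by (simp add: card_lists_length_eq)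
    ultimately show ?thesis using cnt[of i] i_lt by simp
  qed
  have C: "\<forall>C \<in> e_cycles V n e. \<exists>i \<le> n. card C = 2 ^ i"
    unfolding char using card_orb[OF st(1)] by auto
  show ?thesis using A B C by blast
qed
end
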